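(* Let $p$ be a prime number, $n$ a positive integer and $Q\in\mathbb{Z}[X_1,\dots,X_n]$ a quadratic form. Then the set $R(\mathbb{N}\cap Q(\mathbb{Z}^n))$ is dense in $\mathbb{Q}_p$ if and only if $R(Q(\mathbb{Z}^n))$ is dense in $\mathbb{Q}_p$ and $\mathbb{N}_+\cap Q(\mathbb{Z}^n)\neq\varnothing$. Likewise, $R(\mathbb{N}\cap Q(\mathbb{N}^n))$ is dense in $\mathbb{Q}_p$ if and only if $R(Q(\mathbb{N}^n))$ is dense in $\mathbb{Q}_p$ and $\mathbb{N}_+\cap Q(\mathbb{N}^n)\neq\varnothing$.
   Context: $\mathbb{N}$ denotes the nonnegative integers and $\mathbb{N}_+$ the positive integers. A quadratic form is a homogeneous polynomial of degree two, not all coefficients zero. For a subset $A$ of a field, $R(A)=\{a/b: a,b\in A,\ b\neq 0\}$. For $S\subseteq\mathbb{Z}^n$, $Q(S)=\{Q(\mathbf{x}):\mathbf{x}\in S\}$. Density is with respect to the $p$-adic topology on $\mathbb{Q}_p$. *)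

theory Defs
  imports Complex_Main "HOL-Computational_Algebra.Computational_Algebra"
begin

definition padic_val :: "nat \<Rightarrow> rat \<Rightarrow> int" where
  "padic_val p r = (case quotient_of r of (a, b) \<Rightarrow>
      int (multiplicity (int p) a) - int (multiplicity (int p) b))"

definition padic_norm :: "nat \<Rightarrow> rat \<Rightarrow> real" where
  "padic_norm p r = (if r = 0 then 0 else real p powr (- real_of_int (padic_val p r)))"

text \<open>A set of rationals is dense in Q_p.  Since Q is dense in Q_p, this holds iff
  every rational is a p-adic limit of elements of the set.\<close>
definition padic_dense :: "nat \<Rightarrow> rat set \<Rightarrow> bool" where
  "padic_dense p A \<longleftrightarrow> (\<forall>x::rat. \<forall>\<epsilon>>0. \<exists>a\<in>A. padic_norm p (a - x) < \<epsilon>)"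

definition ratio_set :: "int set \<Rightarrow> rat set" where
  "ratio_set A = {of_int a / of_int b | a b. a \<in> A \<and> b \<in> A \<and> b \<noteq> 0}"

definition qform :: "nat \<Rightarrow> (nat \<Rightarrow> nat \<Rightarrow> int) \<Rightarrow> (nat \<Rightarrow> int) \<Rightarrow> int" where
  "qform n c x = (\<Sum>j<n. \<Sum>i\<le>j. c i j * x i * x j)"

definition is_qform :: "nat \<Rightarrow> (nat \<Rightarrow> nat \<Rightarrow> int) \<Rightarrow> bool" where
  "is_qform n c \<longleftrightarrow> (\<exists>i j. i \<le> j \<and> j < n \<and> c i j \<noteq> 0)"

definition Zn :: "nat \<Rightarrow> (nat \<Rightarrow> int) set" where
  "Zn n = {x. \<forall>i\<ge>n. x i = 0}"

definition Nn :: "nat \<Rightarrow> (nat \<Rightarrow> int) set" where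
  "Nn n = {x. (\<forall>i\<ge>n. x i = 0) \<and> (\<forall>i<n. x i \<ge> 0)}"

end

theory Submission imports Defs begin

lemma pv_div:
  assumes p: "prime p" and u: "u \<noteq> 0" and w: "w \<noteq> 0"
  shows "padic_val p (of_int u / of_int w) = int (multiplicity (int p) u) - int (multiplicity (int p) w)"
proof -
  obtain a b where q: "quotient_of (of_int u / of_int w) = (a, b)" by (cases "quotient_of (of_int u / of_int w)")
  have b: "b > 0" using quotient_of_denom_pos[OF q] .
  have r: "(of_int u / of_int w :: rat) = of_int a / of_int b" using quotient_of_div[OF q] .
  hence "(of_int (u * b) :: rat) = of_int (a * w)" using b w by (simp add: field_simps)
  hence e: "u * b = a * w" by (simp only: of_int_eq_iff)
  have a: "a \<noteq> 0" using e u b by auto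
  have pe: "prime_elem (int p)" using p by simp
  have "multiplicity (int p) (u*b) = multiplicity (int p) (a*w)" using e by simp
  hence "multiplicity (int p) u + multiplicity (int p) b = multiplicity (int p) a + multiplicity (int p) w"
    using prime_elem_multiplicity_mult_distrib[OF pe] u w a b by simp
  thus ?thesis unfolding padic_val_def q by simp
qed

lemma mult_sum_ge:
  assumes p: "prime p" and "(X::int) + Y \<noteq> 0"
  shows "multiplicity (int p) (X + Y) \<ge> min (multiplicity (int p) X) (multiplicity (int p) Y)"
proof -
  let ?m = "min (multiplicity (int p) X) (multiplicity (int p) Y)"
  have "int p ^ ?m dvd X" "int p ^ ?m dvd Y" by (auto intro: multiplicity_dvd')
  hence "int p ^ ?m dvd X + Y" by simp
  moreover have "\<not> is_unit (int p)" proof - have "prime (int p)" using p by simp thus ?thesis using not_prime_unit by blast qed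
  ultimately show ?thesis using assms multiplicity_geI by blast
qed

lemma pv_sum:
  assumes p: "prime p" and r: "r \<noteq> 0" and s: "s \<noteq> 0" and rs: "r + s \<noteq> 0"
  shows "padic_val p (r + s) \<ge> min (padic_val p r) (padic_val p s)"
proof -
  obtain u w where q1: "quotient_of r = (u, w)" by (cases "quotient_of r")
  obtain u' w' where q2: "quotient_of s = (u', w')" by (cases "quotient_of s")
  have w: "w > 0" "w' > 0" using quotient_of_denom_pos q1 q2 by auto
  have rr: "r = of_int u / of_int w" "s = of_int u' / of_int w'" using quotient_of_div q1 q2 by auto
  have u: "u \<noteq> 0" "u' \<noteq> 0" using rr r s by auto
  have sum: "r + s = of_int (u*w' + u'*w) / of_int (w*w')" using rr w by (simp add: field_simps)
  have nz: "u*w' + u'*w \<noteq> 0" proof assume "u*w' + u'*w = 0" hence "r + s = 0" using sum by simp thus False using rs by simp qed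
  have pe: "prime_elem (int p)" using p by simp
  let ?M = "multiplicity (int p)"
  have v1: "padic_val p r = int (?M u) - int (?M w)" using pv_div[OF p u(1)] w rr by simp
  have v2: "padic_val p s = int (?M u') - int (?M w')" using pv_div[OF p u(2)] w rr by simp
  have v3: "padic_val p (r+s) = int (?M (u*w' + u'*w)) - int (?M w) - int (?M w')"
  proof -
    have "padic_val p (r+s) = int (?M (u*w' + u'*w)) - int (?M (w*w'))"
      using pv_div[OF p nz, of "w*w'"] w sum by simp
    thus ?thesis using prime_elem_multiplicity_mult_distrib[OF pe, of w w'] w by simp
  qed
  have m1: "?M (u*w') = ?M u + ?M w'" "?M (u'*w) = ?M u' + ?M w"
    using prime_elem_multiplicity_mult_distrib[OF pe] u w by auto
  have "?M (u*w' + u'*w) \<ge> min (?M (u*w')) (?M (u'*w))" using mult_sum_ge[OF p nz] .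
  thus ?thesis using v1 v2 v3 m1 by linarith
qed

lemma pn_ultra:
  assumes p: "prime p"
  shows "padic_norm p (r + s) \<le> max (padic_norm p r) (padic_norm p s)"
proof -
  have p1: "real p > 1" using p prime_gt_1_nat by simp
  have nn: "\<And>t. padic_norm p t \<ge> 0" unfolding padic_norm_def by simp
  show ?thesis
  proof (cases "r = 0 \<or> s = 0 \<or> r + s = 0")
    case True thus ?thesis using nn by (auto simp: padic_norm_def le_max_iff_disj)
  next
    case False
    hence "padic_val p (r + s) \<ge> min (padic_val p r) (padic_val p s)" using pv_sum[OF p] by auto
    hence "real p powr (- real_of_int (padic_val p (r+s))) \<le> max (real p powr (- real_of_int (padic_val p r))) (real p powr (- real_of_int (padic_val p s)))"
      using p1 by (auto simp: min_def max_def split: if_splits)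
    thus ?thesis using False by (simp add: padic_norm_def)
  qed
qed

lemma pn_perturb:
  assumes p: "prime p" and b: "b \<noteq> 0" and b': "b' \<noteq> 0"
    and da: "int p ^ K dvd (a' - a)" and db: "int p ^ K dvd (b' - b)"
    and K: "K > multiplicity (int p) b"
  shows "padic_norm p (of_int a' / of_int b' - of_int a / of_int b)
          \<le> real p powr (- (real K - 2 * real (multiplicity (int p) b)))"
proof -
  let ?M = "multiplicity (int p)"
  have pe: "prime_elem (int p)" using p by simp
  have nu: "\<not> is_unit (int p)" proof - have "prime (int p)" using p by simp thus ?thesis using not_prime_unit by blast qed
  define N where "N = a' * b - a * b'"
  have diff: "(of_int a' / of_int b' - of_int a / of_int b :: rat) = of_int N / of_int (b * b')"
    using b b' by (simp add: N_def field_simps)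
  have "N = (a' - a) * b - a * (b' - b)" by (simp add: N_def algebra_simps)
  hence dN: "int p ^ K dvd N" using da db by (metis dvd_diff dvd_mult dvd_mult2)
  show ?thesis
  proof (cases "N = 0")
    case True thus ?thesis using diff by (simp add: padic_norm_def)
  next
    case False
    have Mb': "?M b' \<le> ?M b"
    proof (rule ccontr)
      assume "\<not> ?M b' \<le> ?M b"
      hence d1: "int p ^ Suc (?M b) dvd b'" by (intro multiplicity_dvd') simp
      have d2: "int p ^ Suc (?M b) dvd (b' - b)"
      proof -
        have "int p ^ Suc (?M b) dvd int p ^ K" using K by (intro le_imp_power_dvd) simp
        thus ?thesis using db by (rule dvd_trans)
      qed
      have "int p ^ Suc (?M b) dvd b"
      proof -
        have "b = b' - (b' - b)" by simp
        thus ?thesis using d1 d2 by (metis dvd_diff)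
      qed
      hence "?M b \<ge> Suc (?M b)" using multiplicity_geI[OF b nu] by blast
      thus False by simp
    qed
    have MN: "?M N \<ge> K" using multiplicity_geI[OF False nu dN] .
    have "padic_val p (of_int N / of_int (b * b')) = int (?M N) - int (?M (b*b'))"
      using pv_div[OF p False, of "b*b'"] b b' by (simp del: of_int_mult)
    also have "\<dots> = int (?M N) - int (?M b) - int (?M b')"
      using prime_elem_multiplicity_mult_distrib[OF pe b b'] by simp
    finally have v: "padic_val p (of_int N / of_int (b * b')) \<ge> int K - 2 * int (?M b)"
      using MN Mb' by linarith
    have nz: "(of_int N / of_int (b * b') :: rat) \<noteq> 0" using False b b' by simp
    have p1: "real p > 1" using p prime_gt_1_nat by simp
    have "real p powr (- real_of_int (padic_val p (of_int N / of_int (b * b'))))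
          \<le> real p powr (- (real K - 2 * real (?M b)))"
      using v p1 by (intro powr_mono) linarith+
    thus ?thesis using diff nz by (simp add: padic_norm_def)
  qed
qed

definition qbil :: "nat \<Rightarrow> (nat \<Rightarrow> nat \<Rightarrow> int) \<Rightarrow> (nat \<Rightarrow> int) \<Rightarrow> (nat \<Rightarrow> int) \<Rightarrow> int" where
  "qbil n c x y = (\<Sum>j<n. \<Sum>i\<le>j. c i j * (x i * y j + y i * x j))"

lemma qform_expand:
  "qform n c (\<lambda>i. x i + t * y i) = qform n c x + t * qbil n c x y + t^2 * qform n c y"
proof -
  have e: "\<And>i j. c i j * (x i + t * y i) * (x j + t * y j) =
     c i j * x i * x j + t * (c i j * (x i * y j + y i * x j)) + t^2 * (c i j * y i * y j)"
    by (simp add: algebra_simps power2_eq_square)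
  have "qform n c (\<lambda>i. x i + t * y i) = (\<Sum>j<n. \<Sum>i\<le>j. c i j * x i * x j + t * (c i j * (x i * y j + y i * x j)) + t^2 * (c i j * y i * y j))"
    unfolding qform_def e ..
  also have "\<dots> = qform n c x + t * qbil n c x y + t^2 * qform n c y"
    unfolding qform_def qbil_def sum.distrib sum_distrib_left ..
  finally show ?thesis .
qed

lemma perturb:
  assumes cl: "\<And>x y N. x \<in> S \<Longrightarrow> y \<in> S \<Longrightarrow> N \<ge> 0 \<Longrightarrow> (\<lambda>i. x i + N * y i) \<in> S"
    and x: "x \<in> S" and y: "y \<in> S" and pos: "qform n c y > 0" and p: "p > 0"
  shows "\<exists>x'\<in>S. qform n c x' > 0 \<and> (p::int) ^ K dvd (qform n c x' - qform n c x)"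
proof -
  define B where "B = qbil n c x y"
  define j where "j = \<bar>qform n c x\<bar> + \<bar>B\<bar> + 1"
  define N where "N = p ^ K * j"
  have j1: "j \<ge> 1" unfolding j_def by simp
  have pK: "p ^ K \<ge> 1" using p by simp
  have Nj: "N \<ge> j" unfolding N_def using mult_right_mono[OF pK, of j] j1 by simp
  have N0: "N \<ge> 0" using Nj j1 by simp
  let ?x' = "\<lambda>i. x i + N * y i"
  have mem: "?x' \<in> S" using cl x y N0 by blast
  have ex: "qform n c ?x' = qform n c x + N * B + N^2 * qform n c y"
    unfolding B_def by (rule qform_expand)
  have "N^2 * qform n c y \<ge> N^2" using mult_left_mono[of 1 "qform n c y" "N^2"] pos by simp
  moreover have "N^2 \<ge> N * j" using Nj N0 by (simp add: power2_eq_square mult_left_mono)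
  moreover have "N * j = N * \<bar>qform n c x\<bar> + N * \<bar>B\<bar> + N" unfolding j_def by (simp add: algebra_simps)
  moreover have "N * \<bar>qform n c x\<bar> \<ge> \<bar>qform n c x\<bar>" using mult_right_mono[of 1 N "\<bar>qform n c x\<bar>"] Nj j1 by simp
  moreover have "N * \<bar>B\<bar> \<ge> - (N * B)" proof -
    have "N * \<bar>B\<bar> = \<bar>N * B\<bar>" using N0 by (simp add: abs_mult)
    thus ?thesis using abs_ge_minus_self[of "N*B"] by linarith
  qed
  moreover have "\<bar>qform n c x\<bar> \<ge> - qform n c x" by simp
  ultimately have "qform n c ?x' > 0" using ex j1 Nj by linarith
  moreover have "qform n c ?x' - qform n c x = p ^ K * (j * (B + N * qform n c y))"
    using ex unfolding N_def by (simp add: algebra_simps power2_eq_square)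
  ultimately show ?thesis using mem by (intro bexI[of _ ?x'] conjI) (auto intro: dvdI)
qed

lemma ratio_set_mono: "A \<subseteq> B \<Longrightarrow> ratio_set A \<subseteq> ratio_set B"
  unfolding ratio_set_def by blast

lemma dense_mono: "padic_dense p A \<Longrightarrow> A \<subseteq> B \<Longrightarrow> padic_dense p B"
  unfolding padic_dense_def by blast

lemma dense_nonempty: "padic_dense p A \<Longrightarrow> A \<noteq> {}"
  unfolding padic_dense_def by (metis empty_iff zero_less_one)

lemma main_equiv:
  assumes p: "prime p"
    and cl: "\<And>x y N. x \<in> S \<Longrightarrow> y \<in> S \<Longrightarrow> N \<ge> 0 \<Longrightarrow> (\<lambda>i. x i + N * y i) \<in> S"
  shows "padic_dense p (ratio_set {v \<in> qform n c ` S. v \<ge> 0})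
            \<longleftrightarrow> padic_dense p (ratio_set (qform n c ` S))
                \<and> (\<exists>v \<in> qform n c ` S. v > 0)"
proof
  assume d: "padic_dense p (ratio_set {v \<in> qform n c ` S. v \<ge> 0})"
  have "padic_dense p (ratio_set (qform n c ` S))"
    by (rule dense_mono[OF d ratio_set_mono]) blast
  moreover have "\<exists>v \<in> qform n c ` S. v > 0"
  proof (rule ccontr)
    assume "\<not> ?thesis"
    hence "{v \<in> qform n c ` S. v \<ge> 0} \<subseteq> {0}" by force
    hence "ratio_set {v \<in> qform n c ` S. v \<ge> 0} = {}" unfolding ratio_set_def by blast
    thus False using dense_nonempty[OF d] by simp
  qed
  ultimately show "padic_dense p (ratio_set (qform n c ` S)) \<and> (\<exists>v \<in> qform n c ` S. v > 0)" ..
next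
  assume "padic_dense p (ratio_set (qform n c ` S)) \<and> (\<exists>v \<in> qform n c ` S. v > 0)"
  then obtain y where d: "padic_dense p (ratio_set (qform n c ` S))" and y: "y \<in> S" and pos: "qform n c y > 0"
    by blast
  have p0: "int p > 0" using p prime_gt_0_nat by simp
  have p1: "real p > 1" using p prime_gt_1_nat by simp
  show "padic_dense p (ratio_set {v \<in> qform n c ` S. v \<ge> 0})"
    unfolding padic_dense_def
  proof (intro allI impI)
    fix t :: rat and \<epsilon> :: real
    assume e: "\<epsilon> > 0"
    obtain q where q: "q \<in> ratio_set (qform n c ` S)" and qn: "padic_norm p (q - t) < \<epsilon>"
      using d e unfolding padic_dense_def by blast
    obtain xa xb where xa: "xa \<in> S" and xb: "xb \<in> S" and b0: "qform n c xb \<noteq> 0"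
      and qd: "q = of_int (qform n c xa) / of_int (qform n c xb)"
      using q unfolding ratio_set_def by blast
    let ?m = "multiplicity (int p) (qform n c xb)"
    obtain k :: nat where k: "1 / \<epsilon> < real p ^ k" using real_arch_pow[OF p1] by blast
    define K where "K = k + 2 * ?m + 1"
    obtain xa' where xa': "xa' \<in> S" "qform n c xa' > 0" "int p ^ K dvd (qform n c xa' - qform n c xa)"
      using perturb[OF cl xa y pos p0] by blast
    obtain xb' where xb': "xb' \<in> S" "qform n c xb' > 0" "int p ^ K dvd (qform n c xb' - qform n c xb)"
      using perturb[OF cl xb y pos p0] by blast
    define q' where "q' = (of_int (qform n c xa') / of_int (qform n c xb') :: rat)"
    have q'in: "q' \<in> ratio_set {v \<in> qform n c ` S. v \<ge> 0}"
      unfolding ratio_set_def q'_def using xa' xb' by fastforce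
    have "padic_norm p (q' - q) \<le> real p powr (- (real K - 2 * real ?m))"
      unfolding q'_def qd
      by (rule pn_perturb[OF p b0]) (use xa' xb' K_def in auto)
    also have "\<dots> = real p powr (- real (k + 1))" unfolding K_def by simp
    also have "\<dots> < real p powr (- real k)" using p1 by (intro powr_less_mono) auto
    also have "\<dots> = 1 / real p ^ k" using p1 by (simp add: powr_minus_divide powr_realpow)
    also have "\<dots> < \<epsilon>" using k e p1 by (simp add: field_simps)
    finally have n2: "padic_norm p (q' - q) < \<epsilon>" .
    have "padic_norm p (q' - t) = padic_norm p ((q - t) + (q' - q))" by simp
    also have "\<dots> \<le> max (padic_norm p (q - t)) (padic_norm p (q' - q))" by (rule pn_ultra[OF p])
    finally have "padic_norm p (q' - t) < \<epsilon>" using qn n2 by simp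
    thus "\<exists>a\<in>ratio_set {v \<in> qform n c ` S. v \<ge> 0}. padic_norm p (a - t) < \<epsilon>"
      using q'in by blast
  qed
qed

theorem theorem2:
  fixes p n :: nat and c :: "nat \<Rightarrow> nat \<Rightarrow> int"
  assumes "prime p" and "n \<ge> 1" and "is_qform n c"
  shows "(padic_dense p (ratio_set {v \<in> qform n c ` Zn n. v \<ge> 0})
            \<longleftrightarrow> padic_dense p (ratio_set (qform n c ` Zn n))
                \<and> (\<exists>v \<in> qform n c ` Zn n. v > 0))
       \<and> (padic_dense p (ratio_set {v \<in> qform n c ` Nn n. v \<ge> 0})
            \<longleftrightarrow> padic_dense p (ratio_set (qform n c ` Nn n))
                \<and> (\<exists>v \<in> qform n c ` Nn n. v > 0))"
proof
  show "padic_dense p (ratio_set {v \<in> qform n c ` Zn n. v \<ge> 0})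
            \<longleftrightarrow> padic_dense p (ratio_set (qform n c ` Zn n))
                \<and> (\<exists>v \<in> qform n c ` Zn n. v > 0)"
    by (rule main_equiv[OF assms(1)]) (auto simp: Zn_def)
  show "padic_dense p (ratio_set {v \<in> qform n c ` Nn n. v \<ge> 0})
            \<longleftrightarrow> padic_dense p (ratio_set (qform n c ` Nn n))
                \<and> (\<exists>v \<in> qform n c ` Nn n. v > 0)"
    by (rule main_equiv[OF assms(1)]) (auto simp: Nn_def)
qed

end
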